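(* For any natural number $n \geq 1$, $\{\omega \cdot n, \omega^\star \cdot n\} \leq_c \{\omega^2 \cdot n, (\omega^2)^\star \cdot n\}$.
   Context: Structures have domains contained in $\omega$. For countable structures $\mathcal{A},\mathcal{B}$, the class $\{\mathcal{A},\mathcal{B}\}$ denotes the class of all structures (with domain $\subseteq\omega$) isomorphic to $\mathcal{A}$ or to $\mathcal{B}$. Linear orders are in the language $\{<\}$; $L^\star$ is the reverse of a linear order $L$; $\omega\cdot n$, $\omega^2\cdot n$ are ordinal order types. An enumeration operator $\Gamma$ is a c.e. set of pairs $(\alpha,\varphi)$ with $\alpha$ a finite set of basic (atomic or negated atomic) sentences of the input language with constants from $\omega$ and $\varphi$ a basic sentence of the output language with constants from $\omega$; $\Gamma(X)=\{\varphi : (\alpha,\varphi)\in\Gamma,\ \alpha\subseteq X\}$. $\Gamma$ is a computable embedding of $\mathcal{K}_0$ into $\mathcal{K}_1$ ($\mathcal{K}_0\leq_c\mathcal{K}_1$) if for every $\mathcal{A}\in\mathcal{K}_0$, $\Gamma$ applied to the atomic diagram of $\mathcal{A}$ is the atomic diagram of a structure $\Gamma(\mathcal{A})\in\mathcal{K}_1$, and for all $\mathcal{A},\mathcal{B}\in\mathcal{K}_0$, $\mathcal{A}\cong\mathcal{B}$ iff $\Gamma(\mathcal{A})\cong\Gamma(\mathcal{B})$. *)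

theory Defs
  imports Main "HOL-Library.Nat_Bijection"
begin

definition SC :: "nat list \<Rightarrow> nat" where
  "SC l = (case l of [] \<Rightarrow> Suc 0 | x # _ \<Rightarrow> Suc x)"

definition PROJ :: "nat \<Rightarrow> nat list \<Rightarrow> nat" where
  "PROJ i l = (case drop i l of [] \<Rightarrow> 0 | x # _ \<Rightarrow> x)"

definition COMP :: "(nat list \<Rightarrow> nat) \<Rightarrow> (nat list \<Rightarrow> nat) list \<Rightarrow> nat list \<Rightarrow> nat" where
  "COMP g fs l = g (map (\<lambda>f. f l) fs)"

fun PREC :: "(nat list \<Rightarrow> nat) \<Rightarrow> (nat list \<Rightarrow> nat) \<Rightarrow> nat list \<Rightarrow> nat" where
  "PREC f g [] = f []"
| "PREC f g (x # l) = rec_nat (f l) (\<lambda>y r. g (r # y # l)) x"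

inductive PRIMREC :: "(nat list \<Rightarrow> nat) \<Rightarrow> bool" where
  zero: "PRIMREC (\<lambda>_. 0)"
| suc: "PRIMREC SC"
| proj: "PRIMREC (PROJ i)"
| comp: "PRIMREC g \<Longrightarrow> (\<forall>f \<in> set fs. PRIMREC f) \<Longrightarrow> PRIMREC (COMP g fs)"
| prec: "PRIMREC f \<Longrightarrow> PRIMREC g \<Longrightarrow> PRIMREC (PREC f g)"

text \<open>A set of naturals is c.e. iff it is the projection of a primitive recursive relation
  (Kleene normal form).\<close>
definition ce_set :: "nat set \<Rightarrow> bool" where
  "ce_set A \<longleftrightarrow> (\<exists>f. PRIMREC f \<and> A = {x. \<exists>y. f [x, y] = 0})"

datatype bsent = Lt nat nat | Eq nat nat | NLt nat nat | NEq nat nat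

fun bsent_code :: "bsent \<Rightarrow> nat" where
  "bsent_code (Lt a b) = prod_encode (0, prod_encode (a, b))"
| "bsent_code (Eq a b) = prod_encode (1, prod_encode (a, b))"
| "bsent_code (NLt a b) = prod_encode (2, prod_encode (a, b))"
| "bsent_code (NEq a b) = prod_encode (3, prod_encode (a, b))"

text \<open>A pair (alpha, phi) of an enumeration operator; the finite set alpha is given by a list
  enumerating it.\<close>
definition pair_code :: "bsent list \<times> bsent \<Rightarrow> nat" where
  "pair_code p = prod_encode (list_encode (map bsent_code (fst p)), bsent_code (snd p))"

definition enum_op :: "(bsent list \<times> bsent) set \<Rightarrow> bool" where
  "enum_op \<Gamma> \<longleftrightarrow> ce_set (pair_code ` \<Gamma>)"

definition apply_op :: "(bsent list \<times> bsent) set \<Rightarrow> bsent set \<Rightarrow> bsent set" where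
  "apply_op \<Gamma> X = {\<phi>. \<exists>\<alpha>. (\<alpha>, \<phi>) \<in> \<Gamma> \<and> set \<alpha> \<subseteq> X}"

type_synonym struc = "nat set \<times> nat rel"

definition is_struc :: "struc \<Rightarrow> bool" where
  "is_struc S \<longleftrightarrow> fst S \<noteq> {} \<and> snd S \<subseteq> fst S \<times> fst S"

definition diag :: "struc \<Rightarrow> bsent set" where
  "diag S = {Lt a b | a b. a \<in> fst S \<and> b \<in> fst S \<and> (a, b) \<in> snd S}
          \<union> {NLt a b | a b. a \<in> fst S \<and> b \<in> fst S \<and> (a, b) \<notin> snd S}
          \<union> {Eq a a | a. a \<in> fst S}
          \<union> {NEq a b | a b. a \<in> fst S \<and> b \<in> fst S \<and> a \<noteq> b}"

definition iso :: "struc \<Rightarrow> struc \<Rightarrow> bool" where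
  "iso S T \<longleftrightarrow> (\<exists>f. bij_betw f (fst S) (fst T) \<and>
      (\<forall>a \<in> fst S. \<forall>b \<in> fst S. (a, b) \<in> snd S \<longleftrightarrow> (f a, f b) \<in> snd T))"

definition cls2 :: "struc \<Rightarrow> struc \<Rightarrow> struc set" where
  "cls2 A B = {S. is_struc S \<and> (iso S A \<or> iso S B)}"

definition comp_embedding :: "(bsent list \<times> bsent) set \<Rightarrow> struc set \<Rightarrow> struc set \<Rightarrow> bool" where
  "comp_embedding \<Gamma> K0 K1 \<longleftrightarrow> enum_op \<Gamma> \<and>
     (\<forall>A \<in> K0. \<exists>B \<in> K1. apply_op \<Gamma> (diag A) = diag B) \<and>
     (\<forall>A1 \<in> K0. \<forall>A2 \<in> K0. \<forall>B1 B2. is_struc B1 \<longrightarrow> is_struc B2 \<longrightarrow>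
        apply_op \<Gamma> (diag A1) = diag B1 \<longrightarrow> apply_op \<Gamma> (diag A2) = diag B2 \<longrightarrow>
        (iso A1 A2 \<longleftrightarrow> iso B1 B2))"

definition comp_reducible :: "struc set \<Rightarrow> struc set \<Rightarrow> bool" where
  "comp_reducible K0 K1 \<longleftrightarrow> (\<exists>\<Gamma>. comp_embedding \<Gamma> K0 K1)"

definition omega :: struc where
  "omega = (UNIV, {(a, b). a < b})"

definition omega2 :: struc where
  "omega2 = (UNIV, {(prod_encode (a, b), prod_encode (c, d)) | a b c d. a < c \<or> (a = c \<and> b < d)})"

definition rev_order :: "struc \<Rightarrow> struc" where
  "rev_order L = (fst L, (snd L)\<inverse>)"

definition times_n :: "struc \<Rightarrow> nat \<Rightarrow> struc" where
  "times_n L n = ({prod_encode (i, x) | i x. i < n \<and> x \<in> fst L},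
     {(prod_encode (i, x), prod_encode (j, y)) | i j x y. i < n \<and> j < n \<and> x \<in> fst L \<and> y \<in> fst L
        \<and> (i < j \<or> (i = j \<and> (x, y) \<in> snd L))})"

end

theory Submission
  imports Defs
begin


definition pr :: "nat \<Rightarrow> (nat list \<Rightarrow> nat) \<Rightarrow> bool" where
  "pr n F \<longleftrightarrow> (\<exists>f. PRIMREC f \<and> (\<forall>l. length l = n \<longrightarrow> f l = F l))"

lemma pr_cong: "pr n F \<Longrightarrow> (\<And>l. length l = n \<Longrightarrow> F l = G l) \<Longrightarrow> pr n G"
  unfolding pr_def by metis

lemma pr_zero: "pr n (\<lambda>_. 0)"
  unfolding pr_def using PRIMREC.zero by blast

lemma pr_SucI: "pr n f \<Longrightarrow> pr n (\<lambda>l. Suc (f l))"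
proof -
  assume "pr n f"
  then obtain g where g: "PRIMREC g" "\<forall>l. length l = n \<longrightarrow> g l = f l" unfolding pr_def by blast
  have "PRIMREC (COMP SC [g])" using g(1) by (intro PRIMREC.comp PRIMREC.suc) auto
  moreover have "\<forall>l. length l = n \<longrightarrow> COMP SC [g] l = Suc (f l)"
    using g(2) by (simp add: COMP_def SC_def)
  ultimately show ?thesis unfolding pr_def by blast
qed

lemma pr_const: "pr n (\<lambda>_. c)"
proof (induction c)
  case 0 then show ?case by (rule pr_zero)
next
  case (Suc c) then show ?case by (rule pr_SucI)
qed

lemma pr_proj: "i < n \<Longrightarrow> pr n (\<lambda>l. l ! i)"
  unfolding pr_def
proof (intro exI conjI allI impI)
  show "PRIMREC (PROJ i)" by (rule PRIMREC.proj)
  fix l :: "nat list" assume "i < n" "length l = n"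
  then show "PROJ i l = l ! i" by (simp add: PROJ_def Cons_nth_drop_Suc[symmetric])
qed

lemma pr_comp1: "pr (Suc 0) g \<Longrightarrow> pr n f \<Longrightarrow> pr n (\<lambda>l. g [f l])"
proof -
  assume "pr (Suc 0) g" "pr n f"
  then obtain g' f' where g: "PRIMREC g'" "\<forall>l. length l = Suc 0 \<longrightarrow> g' l = g l"
     and f: "PRIMREC f'" "\<forall>l. length l = n \<longrightarrow> f' l = f l" unfolding pr_def by blast
  have "PRIMREC (COMP g' [f'])" using g(1) f(1) by (intro PRIMREC.comp) auto
  moreover have "\<forall>l. length l = n \<longrightarrow> COMP g' [f'] l = g [f l]"
    using g(2) f(2) by (simp add: COMP_def)
  ultimately show ?thesis unfolding pr_def by blast
qed

lemma pr_comp2: "pr (Suc (Suc 0)) g \<Longrightarrow> pr n f1 \<Longrightarrow> pr n f2 \<Longrightarrow> pr n (\<lambda>l. g [f1 l, f2 l])"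
proof -
  assume "pr (Suc (Suc 0)) g" "pr n f1" "pr n f2"
  then obtain g' f1' f2' where g: "PRIMREC g'" "\<forall>l. length l = Suc (Suc 0) \<longrightarrow> g' l = g l"
     and f1: "PRIMREC f1'" "\<forall>l. length l = n \<longrightarrow> f1' l = f1 l"
     and f2: "PRIMREC f2'" "\<forall>l. length l = n \<longrightarrow> f2' l = f2 l" unfolding pr_def by blast
  have "PRIMREC (COMP g' [f1', f2'])" using g(1) f1(1) f2(1) by (intro PRIMREC.comp) auto
  moreover have "\<forall>l. length l = n \<longrightarrow> COMP g' [f1', f2'] l = g [f1 l, f2 l]"
    using g(2) f1(2) f2(2) by (simp add: COMP_def)
  ultimately show ?thesis unfolding pr_def by blast
qed

lemma pr_rec: "pr n Zf \<Longrightarrow> pr (Suc (Suc n)) G \<Longrightarrow>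
   pr (Suc n) (\<lambda>l. rec_nat (Zf (tl l)) (\<lambda>y r. G (r # y # tl l)) (hd l))"
proof -
  assume "pr n Zf" "pr (Suc (Suc n)) G"
  then obtain f g where f: "PRIMREC f" "\<forall>l. length l = n \<longrightarrow> f l = Zf l"
     and g: "PRIMREC g" "\<forall>l. length l = Suc (Suc n) \<longrightarrow> g l = G l" unfolding pr_def by blast
  have "PRIMREC (PREC f g)" using f(1) g(1) by (rule PRIMREC.prec)
  moreover have "PREC f g l = rec_nat (Zf (tl l)) (\<lambda>y r. G (r # y # tl l)) (hd l)"
    if "length l = Suc n" for l
  proof -
    obtain x l' where l: "l = x # l'" "length l' = n" using \<open>length l = Suc n\<close> by (cases l) auto
    have "rec_nat (f l') (\<lambda>y r. g (r # y # l')) x = rec_nat (Zf l') (\<lambda>y r. G (r # y # l')) x"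
      by (induction x) (simp_all add: f(2) g(2) l(2))
    then show ?thesis using l by simp
  qed
  ultimately show ?thesis unfolding pr_def by blast
qed

definition pr1 :: "(nat \<Rightarrow> nat) \<Rightarrow> bool" where "pr1 h \<longleftrightarrow> pr (Suc 0) (\<lambda>l. h (l ! 0))"
definition pr2 :: "(nat \<Rightarrow> nat \<Rightarrow> nat) \<Rightarrow> bool" where "pr2 h \<longleftrightarrow> pr (Suc (Suc 0)) (\<lambda>l. h (l ! 0) (l ! 1))"

lemma pr1_app: "pr1 h \<Longrightarrow> pr n f \<Longrightarrow> pr n (\<lambda>l. h (f l))"
  unfolding pr1_def by (drule (1) pr_comp1) simp

lemma pr2_app: "pr2 h \<Longrightarrow> pr n f \<Longrightarrow> pr n g \<Longrightarrow> pr n (\<lambda>l. h (f l) (g l))"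
  unfolding pr2_def by (drule (2) pr_comp2) simp

lemma pr1_rec:
  assumes "pr (Suc (Suc 0)) (\<lambda>l. G (l ! 0) (l ! 1))" "h 0 = c" "\<And>x. h (Suc x) = G (h x) x"
  shows "pr1 h"
proof -
  have a: "pr (Suc (Suc 0)) (\<lambda>l. G (l ! 0) (l ! 1))" using assms(1) .
  from pr_rec[OF pr_const a] show ?thesis unfolding pr1_def
  proof (rule pr_cong)
    fix l :: "nat list" assume "length l = Suc 0"
    then obtain x where l: "l = [x]" by (cases l) auto
    have "rec_nat c (\<lambda>y r. G r y) x = h x" by (induction x) (simp_all add: assms)
    then show "rec_nat c (\<lambda>y r. G ((r # y # tl l) ! 0) ((r # y # tl l) ! 1)) (hd l) = h (l ! 0)"
      using l by simp
  qed
qed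

lemma pr2_rec:
  assumes "pr (Suc 0) (\<lambda>l. Zf (l ! 0))" "pr (Suc (Suc (Suc 0))) (\<lambda>l. G (l ! 0) (l ! 1) (l ! 2))"
    "\<And>y. h 0 y = Zf y" "\<And>x y. h (Suc x) y = G (h x y) x y"
  shows "pr2 h"
proof -
  have a: "pr (Suc 0) (\<lambda>l. Zf (l ! 0))" using assms(1) .
  have b: "pr (Suc (Suc (Suc 0))) (\<lambda>l. G (l ! 0) (l ! 1) (l ! 2))" using assms(2) .
  from pr_rec[OF a b] show ?thesis unfolding pr2_def
  proof (rule pr_cong)
    fix l :: "nat list" assume "length l = Suc (Suc 0)"
    then obtain x y where l: "l = [x, y]"
      by (cases l; cases "tl l") auto
    have "rec_nat (Zf y) (\<lambda>z r. G r z y) x = h x y" by (induction x) (simp_all add: assms)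
    then show "rec_nat (Zf (tl l ! 0)) (\<lambda>y r. G ((r # y # tl l) ! 0) ((r # y # tl l) ! 1) ((r # y # tl l) ! 2)) (hd l) = h (l ! 0) (l ! 1)"
      using l by simp
  qed
qed


lemma pr2_add: "pr2 (+)"
  by (rule pr2_rec[where Zf="\<lambda>y. y" and G="\<lambda>r x y. Suc r"]; (intro pr_proj pr_SucI)?; simp)

lemma pr_add: "pr n f \<Longrightarrow> pr n g \<Longrightarrow> pr n (\<lambda>l. f l + g l)"
  by (rule pr2_app[OF pr2_add])

lemma pr2_mult: "pr2 (*)"
  by (rule pr2_rec[where Zf="\<lambda>y. 0" and G="\<lambda>r x y. y + r"]; (intro pr_proj pr_proj pr_const pr_add)?; simp)

lemma pr_mult: "pr n f \<Longrightarrow> pr n g \<Longrightarrow> pr n (\<lambda>l. f l * g l)"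
  by (rule pr2_app[OF pr2_mult])

lemma pr1_pred: "pr1 (\<lambda>x. x - 1)"
  by (rule pr1_rec[where G="\<lambda>r x. x" and c=0]; (intro pr_proj)?; simp)

lemma pr2_rsub: "pr2 (\<lambda>y x. x - y)"
  by (rule pr2_rec[where Zf="\<lambda>y. y" and G="\<lambda>r x y. r - 1"]; (intro pr_proj pr1_app[OF pr1_pred])?; simp)

lemma pr_sub: "pr n f \<Longrightarrow> pr n g \<Longrightarrow> pr n (\<lambda>l. f l - g l)"
proof -
  assume "pr n f" "pr n g"
  from pr2_app[OF pr2_rsub this(2,1)] show ?thesis by simp
qed

lemma pr_if_eq: "pr n a \<Longrightarrow> pr n b \<Longrightarrow> pr n f \<Longrightarrow> pr n g \<Longrightarrow> pr n (\<lambda>l. if a l = b l then f l else g l)"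
proof -
  assume h: "pr n a" "pr n b" "pr n f" "pr n g"
  have "pr n (\<lambda>l. f l * (1 - ((a l - b l) + (b l - a l))) + g l * (1 - (1 - ((a l - b l) + (b l - a l)))))"
    using h by (intro pr_add pr_mult pr_sub pr_const)
  then show ?thesis by (rule pr_cong) auto
qed

lemma pr_if_le: "pr n a \<Longrightarrow> pr n b \<Longrightarrow> pr n f \<Longrightarrow> pr n g \<Longrightarrow> pr n (\<lambda>l. if a l \<le> b l then f l else g l)"
proof -
  assume h: "pr n a" "pr n b" "pr n f" "pr n g"
  have "pr n (\<lambda>l. f l * (1 - (a l - b l)) + g l * (1 - (1 - (a l - b l))))"
    using h by (intro pr_add pr_mult pr_sub pr_const)
  then show ?thesis by (rule pr_cong) auto
qed

lemma pr1_tri: "pr1 triangle"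
  by (rule pr1_rec[where G="\<lambda>r x. r + Suc x" and c=0]; (intro pr_proj pr_proj pr_add pr_SucI)?; simp)

lemma pr_pe: "pr n f \<Longrightarrow> pr n g \<Longrightarrow> pr n (\<lambda>l. prod_encode (f l, g l))"
proof -
  assume h: "pr n f" "pr n g"
  have "pr n (\<lambda>l. triangle (f l + g l) + f l)"
    using h by (intro pr_add pr1_app[OF pr1_tri])
  then show ?thesis by (rule pr_cong) (simp add: prod_encode_def)
qed


fun sdec :: "nat \<Rightarrow> nat" where
  "sdec 0 = 0"
| "sdec (Suc y) = (if triangle (Suc (sdec y)) \<le> Suc y then Suc (sdec y) else sdec y)"

lemma pr1_sdec: "pr1 sdec"
  by (rule pr1_rec[where G="\<lambda>r y. if triangle (Suc r) \<le> Suc y then Suc r else r" and c=0];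
      (intro pr_if_le pr1_app[OF pr1_tri] pr_SucI pr_proj)?; simp)

lemma sdec_bounds: "triangle (sdec y) \<le> y \<and> y < triangle (Suc (sdec y))"
  by (induction y) auto

lemma tri_mono: "s \<le> t \<Longrightarrow> triangle s \<le> triangle t"
  by (induction t) (auto simp: le_Suc_eq)

lemma sdec_unique: "triangle s \<le> y \<Longrightarrow> y < triangle (Suc s) \<Longrightarrow> sdec y = s"
proof -
  assume a: "triangle s \<le> y" "y < triangle (Suc s)"
  have b: "triangle (sdec y) \<le> y" "y < triangle (Suc (sdec y))" using sdec_bounds by auto
  show ?thesis
  proof (rule ccontr)
    assume "sdec y \<noteq> s"
    then have "Suc (sdec y) \<le> s \<or> Suc s \<le> sdec y" by auto
    then show False
      using tri_mono[of "Suc (sdec y)" s] tri_mono[of "Suc s" "sdec y"] a b by auto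
  qed
qed

lemma pd_via_sdec: "fst (prod_decode y) = y - triangle (sdec y) \<and> snd (prod_decode y) = sdec y - (y - triangle (sdec y))"
proof -
  obtain a b where ab: "prod_decode y = (a, b)" by (cases "prod_decode y")
  have y: "y = triangle (a + b) + a"
    using prod_decode_inverse[of y] ab by (simp add: prod_encode_def)
  have "sdec y = a + b"
    by (rule sdec_unique) (use y in auto)
  then show ?thesis using ab y by simp
qed

lemma pr_fst: "pr n f \<Longrightarrow> pr n (\<lambda>l. fst (prod_decode (f l)))"
proof -
  have "pr (Suc 0) (\<lambda>l. l ! 0 - triangle (sdec (l ! 0)))"
    by (intro pr_sub pr1_app[OF pr1_tri] pr1_app[OF pr1_sdec] pr_proj) simp_all
  then have "pr1 (\<lambda>y. fst (prod_decode y))" unfolding pr1_def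
    by (rule pr_cong) (simp add: pd_via_sdec)
  then show "pr n f \<Longrightarrow> pr n (\<lambda>l. fst (prod_decode (f l)))" by (rule pr1_app)
qed

lemma pr_snd: "pr n f \<Longrightarrow> pr n (\<lambda>l. snd (prod_decode (f l)))"
proof -
  have "pr (Suc 0) (\<lambda>l. sdec (l ! 0) - (l ! 0 - triangle (sdec (l ! 0))))"
    by (intro pr_sub pr1_app[OF pr1_tri] pr1_app[OF pr1_sdec] pr_proj) simp_all
  then have "pr1 (\<lambda>y. snd (prod_decode y))" unfolding pr1_def
    by (rule pr_cong) (simp add: pd_via_sdec)
  then show "pr n f \<Longrightarrow> pr n (\<lambda>l. snd (prod_decode (f l)))" by (rule pr1_app)
qed

definition Rr :: "nat \<Rightarrow> nat \<Rightarrow> nat \<Rightarrow> nat \<Rightarrow> nat \<Rightarrow> bsent list \<times> bsent" where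
  "Rr k a b c d =
    (if k = 0 then ([Eq a a, Eq b b], Eq (prod_encode (a,b)) (prod_encode (a,b)))
     else if k = 1 then
       (if prod_encode (a,b) = prod_encode (c,d) then ([Eq a a, Eq b b], Eq (prod_encode (a,b)) (prod_encode (a,b)))
        else ([Eq a a, Eq b b, Eq c c, Eq d d], NEq (prod_encode (a,b)) (prod_encode (c,d))))
     else if k = 2 then ([Lt a c, Eq b b, Eq d d], Lt (prod_encode (a,b)) (prod_encode (c,d)))
     else if k = 3 then ([Eq a a, Lt b d], Lt (prod_encode (a,b)) (prod_encode (a,d)))
     else if k = 4 then
       (if a = c then ([Eq a a, Eq b b], Eq (prod_encode (a,b)) (prod_encode (a,b)))
        else ([NLt a c, Eq b b, Eq d d], NLt (prod_encode (a,b)) (prod_encode (c,d))))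
     else ([NLt a a, NLt b d], NLt (prod_encode (a,b)) (prod_encode (a,d))))"

lemma pr_pc_if: "pr n a \<Longrightarrow> pr n b \<Longrightarrow> pr n (\<lambda>l. pair_code (X l)) \<Longrightarrow> pr n (\<lambda>l. pair_code (Y l)) \<Longrightarrow>
  pr n (\<lambda>l. pair_code (if a l = b l then X l else Y l))"
  by (drule (3) pr_if_eq) (simp add: if_distrib)

lemma pr_pc_pair: "pr n (\<lambda>l. list_encode (map bsent_code (xs l))) \<Longrightarrow> pr n (\<lambda>l. bsent_code (p l)) \<Longrightarrow>
  pr n (\<lambda>l. pair_code (xs l, p l))"
  unfolding pair_code_def by (simp add: pr_pe)

lemma pr_le_nil: "pr n (\<lambda>l. list_encode (map bsent_code []))"
  by (simp add: pr_const)

lemma pr_le_cons: "pr n (\<lambda>l. bsent_code (x l)) \<Longrightarrow> pr n (\<lambda>l. list_encode (map bsent_code (xs l))) \<Longrightarrow>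
  pr n (\<lambda>l. list_encode (map bsent_code (x l # xs l)))"
  by (simp add: pr_pe pr_SucI)

lemma pr_bs: "pr n a \<Longrightarrow> pr n b \<Longrightarrow> pr n (\<lambda>l. bsent_code (Lt (a l) (b l)))"
  "pr n a \<Longrightarrow> pr n b \<Longrightarrow> pr n (\<lambda>l. bsent_code (Eq (a l) (b l)))"
  "pr n a \<Longrightarrow> pr n b \<Longrightarrow> pr n (\<lambda>l. bsent_code (NLt (a l) (b l)))"
  "pr n a \<Longrightarrow> pr n b \<Longrightarrow> pr n (\<lambda>l. bsent_code (NEq (a l) (b l)))"
  by (simp_all add: pr_pe pr_const)

lemma pr_Rr: "pr n k \<Longrightarrow> pr n a \<Longrightarrow> pr n b \<Longrightarrow> pr n c \<Longrightarrow> pr n d \<Longrightarrow>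
  pr n (\<lambda>l. pair_code (Rr (k l) (a l) (b l) (c l) (d l)))"
  unfolding Rr_def
  by (intro pr_pc_if pr_pc_pair pr_le_nil pr_le_cons pr_bs pr_pe pr_const; assumption)

definition Rdec :: "nat \<Rightarrow> bsent list \<times> bsent" where
  "Rdec y = Rr (fst (prod_decode y))
     (fst (prod_decode (fst (prod_decode (snd (prod_decode y))))))
     (snd (prod_decode (fst (prod_decode (snd (prod_decode y))))))
     (fst (prod_decode (snd (prod_decode (snd (prod_decode y))))))
     (snd (prod_decode (snd (prod_decode (snd (prod_decode y))))))"

definition Gam :: "(bsent list \<times> bsent) set" where "Gam = range Rdec"

lemma Rdec_enc: "Rdec (prod_encode (k, prod_encode (prod_encode (a,b), prod_encode (c,d)))) = Rr k a b c d"
  by (simp add: Rdec_def)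

lemma Gam_eq: "Gam = {Rr k a b c d | k a b c d. True}"
  unfolding Gam_def
proof (intro equalityI subsetI)
  fix x assume "x \<in> range Rdec" then show "x \<in> {Rr k a b c d | k a b c d. True}"
    unfolding Rdec_def by blast
next
  fix x assume "x \<in> {Rr k a b c d | k a b c d. True}"
  then obtain k a b c d where "x = Rr k a b c d" by blast
  then show "x \<in> range Rdec" using Rdec_enc by (metis rangeI)
qed

lemma enum_Gam: "enum_op Gam"
proof -
  have "pr (Suc 0) (\<lambda>l. pair_code (Rdec (l ! 0)))"
    unfolding Rdec_def by (intro pr_Rr pr_fst pr_snd pr_proj) simp_all
  then have p1: "pr1 (\<lambda>y. pair_code (Rdec y))" unfolding pr1_def .
  have "pr (Suc (Suc 0)) (\<lambda>l. (l ! 0 - pair_code (Rdec (l ! 1))) + (pair_code (Rdec (l ! 1)) - l ! 0))"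
    by (intro pr_add pr_sub pr1_app[OF p1] pr_proj) simp_all
  then obtain f where f: "PRIMREC f"
    "\<forall>l. length l = Suc (Suc 0) \<longrightarrow> f l = (l ! 0 - pair_code (Rdec (l ! 1))) + (pair_code (Rdec (l ! 1)) - l ! 0)"
    unfolding pr_def by blast
  have "pair_code ` Gam = {x. \<exists>y. f [x, y] = 0}"
    unfolding Gam_def using f(2) by auto
  then show ?thesis unfolding enum_op_def ce_set_def using f(1) by blast
qed




definition sq :: "struc \<Rightarrow> struc" where
  "sq S = (prod_encode ` (fst S \<times> fst S),
     {(prod_encode (a,b), prod_encode (c,d)) | a b c d. a \<in> fst S \<and> b \<in> fst S \<and> c \<in> fst S \<and> d \<in> fst S
        \<and> ((a,c) \<in> snd S \<or> (a = c \<and> (b,d) \<in> snd S))})"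

lemma sq_dom: "prod_encode (a,b) \<in> fst (sq S) \<longleftrightarrow> a \<in> fst S \<and> b \<in> fst S"
  unfolding sq_def by (auto simp: inj_on_image_mem_iff[OF inj_prod_encode])

lemma sq_dom_ex: "p \<in> fst (sq S) \<Longrightarrow> \<exists>a b. p = prod_encode (a,b) \<and> a \<in> fst S \<and> b \<in> fst S"
  unfolding sq_def by auto

lemma sq_rel: "(prod_encode (a,b), prod_encode (c,d)) \<in> snd (sq S) \<longleftrightarrow>
   a \<in> fst S \<and> b \<in> fst S \<and> c \<in> fst S \<and> d \<in> fst S \<and> ((a,c) \<in> snd S \<or> (a = c \<and> (b,d) \<in> snd S))"
  unfolding sq_def by auto

lemma diag_simps:
  "Eq a b \<in> diag S \<longleftrightarrow> a = b \<and> a \<in> fst S"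
  "Lt a b \<in> diag S \<longleftrightarrow> a \<in> fst S \<and> b \<in> fst S \<and> (a,b) \<in> snd S"
  "NLt a b \<in> diag S \<longleftrightarrow> a \<in> fst S \<and> b \<in> fst S \<and> (a,b) \<notin> snd S"
  "NEq a b \<in> diag S \<longleftrightarrow> a \<in> fst S \<and> b \<in> fst S \<and> a \<noteq> b"
  unfolding diag_def by auto

lemma apply_Gam: "apply_op Gam (diag S) = diag (sq S)"
proof (intro equalityI subsetI)
  fix \<phi> assume "\<phi> \<in> apply_op Gam (diag S)"
  then obtain k a b c d where r: "set (fst (Rr k a b c d)) \<subseteq> diag S" "\<phi> = snd (Rr k a b c d)"
    unfolding apply_op_def Gam_eq by (auto, metis fst_conv snd_conv)
  then show "\<phi> \<in> diag (sq S)"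
    by (auto simp: Rr_def diag_simps sq_dom sq_rel split: if_splits)
next
  fix \<phi> assume ph: "\<phi> \<in> diag (sq S)"
  have suff: "\<phi> \<in> apply_op Gam (diag S)" if "set (fst (Rr k a b c d)) \<subseteq> diag S" "\<phi> = snd (Rr k a b c d)" for k a b c d
    unfolding apply_op_def Gam_eq using that by (auto intro!: exI[of _ "fst (Rr k a b c d)"]) (metis prod.collapse)
  from ph consider
      (lt) p q where "\<phi> = Lt p q" "p \<in> fst (sq S)" "q \<in> fst (sq S)" "(p,q) \<in> snd (sq S)"
    | (nlt) p q where "\<phi> = NLt p q" "p \<in> fst (sq S)" "q \<in> fst (sq S)" "(p,q) \<notin> snd (sq S)"
    | (eq) p where "\<phi> = Eq p p" "p \<in> fst (sq S)"
    | (neq) p q where "\<phi> = NEq p q" "p \<in> fst (sq S)" "q \<in> fst (sq S)" "p \<noteq> q"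
    unfolding diag_def by blast
  then show "\<phi> \<in> apply_op Gam (diag S)"
  proof cases
    case lt
    obtain a b c d where p: "p = prod_encode (a,b)" "q = prod_encode (c,d)" and D: "a \<in> fst S" "b \<in> fst S" "c \<in> fst S" "d \<in> fst S"
      using sq_dom_ex[OF lt(2)] sq_dom_ex[OF lt(3)] by blast
    have "(a,c) \<in> snd S \<or> (a = c \<and> (b,d) \<in> snd S)" using lt(4) p sq_rel by blast
    then show ?thesis
    proof
      assume "(a,c) \<in> snd S"
      then show ?thesis using D p lt(1) by (intro suff[of 2 a b c d]) (auto simp: Rr_def diag_simps)
    next
      assume "a = c \<and> (b,d) \<in> snd S"
      then show ?thesis using D p lt(1) by (intro suff[of 3 a b c d]) (auto simp: Rr_def diag_simps)
    qed
  next
    case nlt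
    obtain a b c d where p: "p = prod_encode (a,b)" "q = prod_encode (c,d)" and D: "a \<in> fst S" "b \<in> fst S" "c \<in> fst S" "d \<in> fst S"
      using sq_dom_ex[OF nlt(2)] sq_dom_ex[OF nlt(3)] by blast
    have n: "(a,c) \<notin> snd S" "a = c \<longrightarrow> (b,d) \<notin> snd S" using nlt(4) p D sq_rel by blast+
    show ?thesis
    proof (cases "a = c")
      case False
      then show ?thesis using D p n nlt(1) by (intro suff[of 4 a b c d]) (auto simp: Rr_def diag_simps)
    next
      case True
      then show ?thesis using D p n nlt(1) by (intro suff[of 5 a b c d]) (auto simp: Rr_def diag_simps)
    qed
  next
    case eq
    obtain a b where p: "p = prod_encode (a,b)" and D: "a \<in> fst S" "b \<in> fst S"
      using sq_dom_ex[OF eq(2)] by blast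
    then show ?thesis using eq(1) by (intro suff[of 0 a b 0 0]) (auto simp: Rr_def diag_simps)
  next
    case neq
    obtain a b c d where p: "p = prod_encode (a,b)" "q = prod_encode (c,d)" and D: "a \<in> fst S" "b \<in> fst S" "c \<in> fst S" "d \<in> fst S"
      using sq_dom_ex[OF neq(2)] sq_dom_ex[OF neq(3)] by blast
    then show ?thesis using neq by (intro suff[of 1 a b c d]) (auto simp: Rr_def diag_simps)
  qed
qed




lemma iso_sym: "iso S T \<Longrightarrow> iso T S"
proof -
  assume "iso S T"
  then obtain f where f: "bij_betw f (fst S) (fst T)"
    "\<forall>a \<in> fst S. \<forall>b \<in> fst S. (a, b) \<in> snd S \<longleftrightarrow> (f a, f b) \<in> snd T" unfolding iso_def by blast
  let ?g = "inv_into (fst S) f"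
  have g: "bij_betw ?g (fst T) (fst S)" using f(1) by (rule bij_betw_inv_into)
  have "\<forall>a \<in> fst T. \<forall>b \<in> fst T. (a, b) \<in> snd T \<longleftrightarrow> (?g a, ?g b) \<in> snd S"
  proof (intro ballI)
    fix a b assume ab: "a \<in> fst T" "b \<in> fst T"
    then have "?g a \<in> fst S" "?g b \<in> fst S" "f (?g a) = a" "f (?g b) = b"
      using g f(1) by (auto simp: bij_betw_def f_inv_into_f)
    then show "(a, b) \<in> snd T \<longleftrightarrow> (?g a, ?g b) \<in> snd S" using f(2) by metis
  qed
  then show ?thesis unfolding iso_def using g by blast
qed

lemma iso_trans: "iso S T \<Longrightarrow> iso T U \<Longrightarrow> iso S U"
proof -
  assume "iso S T" "iso T U"
  then obtain f g where f: "bij_betw f (fst S) (fst T)"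
    "\<forall>a \<in> fst S. \<forall>b \<in> fst S. (a, b) \<in> snd S \<longleftrightarrow> (f a, f b) \<in> snd T"
    and g: "bij_betw g (fst T) (fst U)"
    "\<forall>a \<in> fst T. \<forall>b \<in> fst T. (a, b) \<in> snd T \<longleftrightarrow> (g a, g b) \<in> snd U" unfolding iso_def by blast
  have "bij_betw (g \<circ> f) (fst S) (fst U)" using f(1) g(1) by (rule bij_betw_trans)
  moreover have "\<forall>a \<in> fst S. \<forall>b \<in> fst S. (a, b) \<in> snd S \<longleftrightarrow> ((g \<circ> f) a, (g \<circ> f) b) \<in> snd U"
  proof (intro ballI)
    fix a b assume ab: "a \<in> fst S" "b \<in> fst S"
    then have "f a \<in> fst T" "f b \<in> fst T" using f(1) by (auto simp: bij_betw_def)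
    then show "(a, b) \<in> snd S \<longleftrightarrow> ((g \<circ> f) a, (g \<circ> f) b) \<in> snd U" using f(2) g(2) ab by simp
  qed
  ultimately show ?thesis unfolding iso_def by blast
qed

lemma iso_param:
  assumes "inj_on \<phi> P" "inj_on \<psi> P" "fst S = \<phi> ` P" "fst T = \<psi> ` P"
    "\<And>p q. p \<in> P \<Longrightarrow> q \<in> P \<Longrightarrow> (\<phi> p, \<phi> q) \<in> snd S \<longleftrightarrow> (\<psi> p, \<psi> q) \<in> snd T"
  shows "iso S T"
proof -
  let ?f = "\<psi> \<circ> inv_into P \<phi>"
  have "bij_betw (inv_into P \<phi>) (\<phi> ` P) P" using assms(1) by (simp add: bij_betw_inv_into inj_on_imp_bij_betw)
  moreover have "bij_betw \<psi> P (\<psi> ` P)" using assms(2) by (simp add: inj_on_imp_bij_betw)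
  ultimately have "bij_betw ?f (fst S) (fst T)" unfolding assms(3,4) by (rule bij_betw_trans)
  moreover have "\<forall>a \<in> fst S. \<forall>b \<in> fst S. (a, b) \<in> snd S \<longleftrightarrow> (?f a, ?f b) \<in> snd T"
    unfolding assms(3) using assms(1,5) by (auto simp: inv_into_f_f)
  ultimately show ?thesis unfolding iso_def by blast
qed

lemma iso_sq: "iso A B \<Longrightarrow> iso (sq A) (sq B)"
proof -
  assume "iso A B"
  then obtain f where f: "bij_betw f (fst A) (fst B)"
    "\<forall>a \<in> fst A. \<forall>b \<in> fst A. (a, b) \<in> snd A \<longleftrightarrow> (f a, f b) \<in> snd B" unfolding iso_def by blast
  have inj: "inj_on f (fst A)" and img: "f ` fst A = fst B" using f(1) by (auto simp: bij_betw_def)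
  show ?thesis
  proof (rule iso_param[where P="fst A \<times> fst A" and \<phi>=prod_encode and \<psi>="\<lambda>(a,b). prod_encode (f a, f b)"])
    show "inj_on prod_encode (fst A \<times> fst A)" by (rule inj_prod_encode)
    show "inj_on (\<lambda>(a,b). prod_encode (f a, f b)) (fst A \<times> fst A)"
      using inj by (auto simp: inj_on_def)
    show "fst (sq A) = prod_encode ` (fst A \<times> fst A)" by (simp add: sq_def)
    show "fst (sq B) = (\<lambda>(a,b). prod_encode (f a, f b)) ` (fst A \<times> fst A)"
      unfolding sq_def fst_conv img[symmetric] by auto
    fix p q assume "p \<in> fst A \<times> fst A" "q \<in> fst A \<times> fst A"
    then obtain a b c d where pq: "p = (a,b)" "q = (c,d)" "a \<in> fst A" "b \<in> fst A" "c \<in> fst A" "d \<in> fst A" by auto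
    have fi: "f a \<in> fst B" "f b \<in> fst B" "f c \<in> fst B" "f d \<in> fst B" using pq img by auto
    have "f a = f c \<longleftrightarrow> a = c" using inj pq by (auto simp: inj_on_def)
    then show "(prod_encode p, prod_encode q) \<in> snd (sq A) \<longleftrightarrow>
      ((\<lambda>(a,b). prod_encode (f a, f b)) p, (\<lambda>(a,b). prod_encode (f a, f b)) q) \<in> snd (sq B)"
      using pq fi f(2) by (simp add: sq_rel)
  qed
qed

definition has_least :: "struc \<Rightarrow> bool" where
  "has_least S \<longleftrightarrow> (\<exists>m \<in> fst S. \<forall>x \<in> fst S. x \<noteq> m \<longrightarrow> (m, x) \<in> snd S)"

lemma has_least_iso: "iso S T \<Longrightarrow> has_least S \<Longrightarrow> has_least T"
proof -
  assume "iso S T" "has_least S"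
  then obtain f where f: "bij_betw f (fst S) (fst T)"
    "\<forall>a \<in> fst S. \<forall>b \<in> fst S. (a, b) \<in> snd S \<longleftrightarrow> (f a, f b) \<in> snd T" unfolding iso_def by blast
  obtain m where m: "m \<in> fst S" "\<forall>x \<in> fst S. x \<noteq> m \<longrightarrow> (m, x) \<in> snd S"
    using \<open>has_least S\<close> unfolding has_least_def by blast
  have "\<forall>y \<in> fst T. y \<noteq> f m \<longrightarrow> (f m, y) \<in> snd T"
  proof (intro ballI impI)
    fix y assume "y \<in> fst T" "y \<noteq> f m"
    then obtain x where "x \<in> fst S" "y = f x" using f(1) by (auto simp: bij_betw_def)
    then show "(f m, y) \<in> snd T" using m f(2) \<open>y \<noteq> f m\<close> by auto
  qed
  moreover have "f m \<in> fst T" using f(1) m(1) by (auto simp: bij_betw_def)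
  ultimately show ?thesis unfolding has_least_def by blast
qed

lemma tn_dom: "prod_encode (i,x) \<in> fst (times_n L n) \<longleftrightarrow> i < n \<and> x \<in> fst L"
  unfolding times_n_def by auto

lemma tn_dom_ex: "p \<in> fst (times_n L n) \<Longrightarrow> \<exists>i x. p = prod_encode (i,x) \<and> i < n \<and> x \<in> fst L"
  unfolding times_n_def by auto

lemma tn_rel: "(prod_encode (i,x), prod_encode (j,y)) \<in> snd (times_n L n) \<longleftrightarrow>
   i < n \<and> j < n \<and> x \<in> fst L \<and> y \<in> fst L \<and> (i < j \<or> (i = j \<and> (x,y) \<in> snd L))"
  unfolding times_n_def by auto

lemma om2_rel: "(prod_encode (a,b), prod_encode (c,d)) \<in> snd omega2 \<longleftrightarrow> a < c \<or> (a = c \<and> b < d)"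
  unfolding omega2_def by auto

lemma om_simps: "fst omega = UNIV" "(a, b) \<in> snd omega \<longleftrightarrow> a < b" "fst omega2 = UNIV"
  "fst (rev_order L) = fst L" "(a, b) \<in> snd (rev_order L) \<longleftrightarrow> (b, a) \<in> snd L"
  unfolding omega_def omega2_def rev_order_def by auto

lemma lexmn: "j < (n::nat) \<Longrightarrow> j' < n \<Longrightarrow> (x*n+j < x'*n+j' \<longleftrightarrow> x < x' \<or> (x = x' \<and> j < j'))"
proof -
  assume j: "j < n" "j' < n"
  have A: "x*n+j < x'*n+j'" if "x < x'" "j < n" for x x' j j' :: nat
  proof -
    have "x*n + j < x*n + n" using that by simp
    also have "\<dots> = Suc x * n" by simp
    also have "\<dots> \<le> x' * n" using that by (intro mult_le_mono1) simp
    finally show ?thesis by simp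
  qed
  have B: "x*n+j < x'*n+j' \<Longrightarrow> x < x' \<or> (x = x' \<and> j < j')"
  proof -
    assume h: "x*n+j < x'*n+j'"
    have "x < x' \<or> x = x' \<or> x' < x" by auto
    then show ?thesis
    proof (elim disjE)
      assume "x' < x" then have "x'*n+j' < x*n+j" using A[of x' x j' j] j by simp
      then show ?thesis using h by simp
    qed (use h in auto)
  qed
  show ?thesis using A[of x x' j j'] B j by auto
qed

lemma eqmn: "j < (n::nat) \<Longrightarrow> j' < n \<Longrightarrow> (x*n+j = x'*n+j' \<longleftrightarrow> x = x' \<and> j = j')"
  using lexmn[of j n j' x x'] lexmn[of j' n j x' x] by (metis nat_neq_iff)

lemma divmod_surj: "0 < (n::nat) \<Longrightarrow> \<exists>x j. j < n \<and> a = x*n + j"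
  by (intro exI[of _ "a div n"] exI[of _ "a mod n"]) simp

lemma tn_dom_eq: "fst (times_n L n) = {prod_encode (i,x) | i x. i < n \<and> x \<in> fst L}"
  unfolding times_n_def by simp

definition rj :: "nat \<Rightarrow> nat \<Rightarrow> nat" where "rj n j = n - 1 - j"

lemma rj_lt: "j < n \<Longrightarrow> rj n j < n" unfolding rj_def by simp
lemma rj_less: "j < n \<Longrightarrow> j' < n \<Longrightarrow> rj n j' < rj n j \<longleftrightarrow> j < j'" unfolding rj_def by auto
lemma rj_eq: "j < n \<Longrightarrow> j' < n \<Longrightarrow> rj n j' = rj n j \<longleftrightarrow> j = j'" unfolding rj_def by auto
lemma rj_rj: "r < n \<Longrightarrow> rj n (rj n r) = r" unfolding rj_def by auto

lemma iso1: assumes "n \<ge> 1" shows "iso (sq (times_n omega n)) (times_n omega2 n)"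
proof (rule iso_param[where P="{..<n} \<times> UNIV \<times> {..<n} \<times> UNIV"
      and \<phi>="\<lambda>(i,x,j,y). prod_encode (prod_encode (i,x), prod_encode (j,y))"
      and \<psi>="\<lambda>(i,x,j,y). prod_encode (i, prod_encode (x*n+j, y))"])
  show "inj_on (\<lambda>(i,x,j,y). prod_encode (prod_encode (i,x), prod_encode (j,y))) ({..<n} \<times> UNIV \<times> {..<n} \<times> UNIV)"
    by (auto simp: inj_on_def)
  show "inj_on (\<lambda>(i,x,j,y). prod_encode (i, prod_encode (x*n+j, y))) ({..<n} \<times> UNIV \<times> {..<n} \<times> UNIV)"
    by (auto simp: inj_on_def eqmn)
  show "fst (sq (times_n omega n)) = (\<lambda>(i,x,j,y). prod_encode (prod_encode (i,x), prod_encode (j,y))) ` ({..<n} \<times> UNIV \<times> {..<n} \<times> UNIV)"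
  proof (intro equalityI subsetI)
    fix p assume "p \<in> fst (sq (times_n omega n))"
    then obtain a b where ab: "p = prod_encode (a,b)" "a \<in> fst (times_n omega n)" "b \<in> fst (times_n omega n)"
      using sq_dom_ex by blast
    then obtain i x j y where "a = prod_encode (i,x)" "b = prod_encode (j,y)" "i < n" "j < n"
      using tn_dom_ex by metis
    then show "p \<in> (\<lambda>(i,x,j,y). prod_encode (prod_encode (i,x), prod_encode (j,y))) ` ({..<n} \<times> UNIV \<times> {..<n} \<times> UNIV)"
      using ab by (auto intro!: image_eqI[where x="(i,x,j,y)"])
  qed (auto simp: sq_dom tn_dom om_simps)
  show "fst (times_n omega2 n) = (\<lambda>(i,x,j,y). prod_encode (i, prod_encode (x*n+j, y))) ` ({..<n} \<times> UNIV \<times> {..<n} \<times> UNIV)"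
  proof (intro equalityI subsetI)
    fix p assume "p \<in> fst (times_n omega2 n)"
    then obtain i z where p: "p = prod_encode (i, z)" "i < n" using tn_dom_ex by blast
    obtain a y where z: "z = prod_encode (a, y)" by (metis prod_decode_inverse surj_pair)
    obtain x j where "j < n" "a = x*n + j" using divmod_surj[of n a] assms by auto
    then show "p \<in> (\<lambda>(i,x,j,y). prod_encode (i, prod_encode (x*n+j, y))) ` ({..<n} \<times> UNIV \<times> {..<n} \<times> UNIV)"
      using p z by (intro image_eqI[where x="(i,x,j,y)"]) simp_all
  qed (auto simp: tn_dom om_simps)
  fix p q :: "nat \<times> nat \<times> nat \<times> nat" assume "p \<in> ({..<n} \<times> UNIV \<times> {..<n} \<times> UNIV)" "q \<in> ({..<n} \<times> UNIV \<times> {..<n} \<times> UNIV)"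
  then obtain i x j y i' x' j' y' where pq: "p = (i,x,j,y)" "q = (i',x',j',y')" "i < n" "j < n" "i' < n" "j' < n"
    by auto
  show "((\<lambda>(i,x,j,y). prod_encode (prod_encode (i,x), prod_encode (j,y))) p,
         (\<lambda>(i,x,j,y). prod_encode (prod_encode (i,x), prod_encode (j,y))) q) \<in> snd (sq (times_n omega n)) \<longleftrightarrow>
        ((\<lambda>(i,x,j,y). prod_encode (i, prod_encode (x*n+j, y))) p,
         (\<lambda>(i,x,j,y). prod_encode (i, prod_encode (x*n+j, y))) q) \<in> snd (times_n omega2 n)"
  proof -
    have L: "x*n+j < x'*n+j' \<longleftrightarrow> x<x' \<or> (x=x' \<and> j<j')" "x*n+j = x'*n+j' \<longleftrightarrow> x=x' \<and> j=j'"
      using lexmn[of j n j' x x'] eqmn[of j n j' x x'] pq by auto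
    show ?thesis unfolding pq(1,2) prod.case sq_rel tn_rel tn_dom om2_rel om_simps L prod_encode_eq prod.inject
      using pq(3-6) by auto
  qed
qed

lemma iso2: assumes "n \<ge> 1" shows "iso (sq (times_n (rev_order omega) n)) (times_n (rev_order omega2) n)"
proof (rule iso_param[where P="{..<n} \<times> UNIV \<times> {..<n} \<times> UNIV"
      and \<phi>="\<lambda>(i,x,j,y). prod_encode (prod_encode (i,x), prod_encode (j,y))"
      and \<psi>="\<lambda>(i,x,j,y). prod_encode (i, prod_encode (x*n+(rj n j), y))"])
  show "inj_on (\<lambda>(i,x,j,y). prod_encode (prod_encode (i,x), prod_encode (j,y))) ({..<n} \<times> UNIV \<times> {..<n} \<times> UNIV)"
    by (auto simp: inj_on_def)
  show "inj_on (\<lambda>(i,x,j,y). prod_encode (i, prod_encode (x*n+(rj n j), y))) ({..<n} \<times> UNIV \<times> {..<n} \<times> UNIV)"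
    by (auto simp: inj_on_def eqmn rj_lt rj_eq)
  show "fst (sq (times_n (rev_order omega) n)) = (\<lambda>(i,x,j,y). prod_encode (prod_encode (i,x), prod_encode (j,y))) ` ({..<n} \<times> UNIV \<times> {..<n} \<times> UNIV)"
  proof (intro equalityI subsetI)
    fix p assume "p \<in> fst (sq (times_n (rev_order omega) n))"
    then obtain a b where ab: "p = prod_encode (a,b)" "a \<in> fst (times_n (rev_order omega) n)" "b \<in> fst (times_n (rev_order omega) n)"
      using sq_dom_ex by blast
    then obtain i x j y where "a = prod_encode (i,x)" "b = prod_encode (j,y)" "i < n" "j < n"
      using tn_dom_ex by metis
    then show "p \<in> (\<lambda>(i,x,j,y). prod_encode (prod_encode (i,x), prod_encode (j,y))) ` ({..<n} \<times> UNIV \<times> {..<n} \<times> UNIV)"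
      using ab by (auto intro!: image_eqI[where x="(i,x,j,y)"])
  qed (auto simp: sq_dom tn_dom om_simps)
  show "fst (times_n (rev_order omega2) n) = (\<lambda>(i,x,j,y). prod_encode (i, prod_encode (x*n+(rj n j), y))) ` ({..<n} \<times> UNIV \<times> {..<n} \<times> UNIV)"
  proof (intro equalityI subsetI)
    fix p assume "p \<in> fst (times_n (rev_order omega2) n)"
    then obtain i z where p: "p = prod_encode (i, z)" "i < n" using tn_dom_ex by blast
    obtain a y where z: "z = prod_encode (a, y)" by (metis prod_decode_inverse surj_pair)
    obtain x r where r: "r < n" "a = x*n + r" using divmod_surj[of n a] assms by auto
    then have "rj n (rj n r) = r" by (simp add: rj_rj)
    then show "p \<in> (\<lambda>(i,x,j,y). prod_encode (i, prod_encode (x*n+(rj n j), y))) ` ({..<n} \<times> UNIV \<times> {..<n} \<times> UNIV)"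
      using p z r by (intro image_eqI[where x="(i,x,rj n r,y)"]) (simp_all add: rj_lt)
  qed (auto simp: tn_dom om_simps)
  fix p q :: "nat \<times> nat \<times> nat \<times> nat" assume "p \<in> ({..<n} \<times> UNIV \<times> {..<n} \<times> UNIV)" "q \<in> ({..<n} \<times> UNIV \<times> {..<n} \<times> UNIV)"
  then obtain i x j y i' x' j' y' where pq: "p = (i,x,j,y)" "q = (i',x',j',y')" "i < n" "j < n" "i' < n" "j' < n"
    by auto
  have l1: "x'*n+(rj n j') < x*n+(rj n j) \<longleftrightarrow> x' < x \<or> (x' = x \<and> j < j')"
    using lexmn[of "rj n j'" n "rj n j" x' x] pq rj_lt rj_less by auto
  have l2: "x'*n+(rj n j') = x*n+(rj n j) \<longleftrightarrow> x' = x \<and> j = j'"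
    using eqmn[of "rj n j'" n "rj n j" x' x] pq rj_lt rj_eq by auto
  show "((\<lambda>(i,x,j,y). prod_encode (prod_encode (i,x), prod_encode (j,y))) p,
         (\<lambda>(i,x,j,y). prod_encode (prod_encode (i,x), prod_encode (j,y))) q) \<in> snd (sq (times_n (rev_order omega) n)) \<longleftrightarrow>
        ((\<lambda>(i,x,j,y). prod_encode (i, prod_encode (x*n+(rj n j), y))) p,
         (\<lambda>(i,x,j,y). prod_encode (i, prod_encode (x*n+(rj n j), y))) q) \<in> snd (times_n (rev_order omega2) n)"
    unfolding pq(1,2) prod.case sq_rel tn_rel tn_dom om2_rel om_simps l1 l2 prod_encode_eq prod.inject
    using pq(3-6) by auto
qed




lemma diag_inj: "is_struc S \<Longrightarrow> is_struc T \<Longrightarrow> diag S = diag T \<Longrightarrow> S = T"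
proof -
  assume s: "is_struc S" "is_struc T" "diag S = diag T"
  have f: "fst S = fst T"
  proof (intro equalityI subsetI)
    fix a assume "a \<in> fst S" then have "Eq a a \<in> diag T" using s(3) diag_simps(1)[of a a S] by simp
    then show "a \<in> fst T" by (simp add: diag_simps)
  next
    fix a assume "a \<in> fst T" then have "Eq a a \<in> diag S" using s(3) diag_simps(1)[of a a T] by simp
    then show "a \<in> fst S" by (simp add: diag_simps)
  qed
  have r: "(a, b) \<in> snd S \<longleftrightarrow> Lt a b \<in> diag S" "(a, b) \<in> snd T \<longleftrightarrow> Lt a b \<in> diag T" for a b
    using s(1,2) unfolding is_struc_def by (auto simp: diag_simps)
  have "snd S = snd T"
    using r s(3) by auto
  then show "S = T" using f by (simp add: prod_eq_iff)
qed

lemma sq_struc: "is_struc S \<Longrightarrow> is_struc (sq S)"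
proof -
  assume s: "is_struc S"
  then obtain a where "a \<in> fst S" unfolding is_struc_def by auto
  then have "prod_encode (a,a) \<in> fst (sq S)" by (simp add: sq_dom)
  moreover have "snd (sq S) \<subseteq> fst (sq S) \<times> fst (sq S)"
    unfolding sq_def by auto
  ultimately show ?thesis unfolding is_struc_def by auto
qed

lemma has_least_om2: "n \<ge> 1 \<Longrightarrow> has_least (times_n omega2 n)"
  unfolding has_least_def
proof (intro bexI[of _ "prod_encode (0, prod_encode (0,0))"] ballI impI)
  assume "n \<ge> 1"
  then show "prod_encode (0, prod_encode (0,0)) \<in> fst (times_n omega2 n)" by (simp add: tn_dom om_simps)
  fix x assume x: "x \<in> fst (times_n omega2 n)" "x \<noteq> prod_encode (0, prod_encode (0,0))"
  then obtain i z where iz: "x = prod_encode (i, z)" "i < n" using tn_dom_ex by blast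
  obtain a b where z: "z = prod_encode (a, b)" by (metis prod_decode_inverse surj_pair)
  show "(prod_encode (0, prod_encode (0,0)), x) \<in> snd (times_n omega2 n)"
    using iz z x(2) \<open>n \<ge> 1\<close> by (auto simp: tn_rel om2_rel om_simps)
qed

lemma not_has_least_rev: "\<not> has_least (times_n (rev_order omega2) n)"
  unfolding has_least_def
proof
  assume "\<exists>m\<in>fst (times_n (rev_order omega2) n). \<forall>x\<in>fst (times_n (rev_order omega2) n). x \<noteq> m \<longrightarrow> (m, x) \<in> snd (times_n (rev_order omega2) n)"
  then obtain m where m: "m \<in> fst (times_n (rev_order omega2) n)"
    "\<forall>x\<in>fst (times_n (rev_order omega2) n). x \<noteq> m \<longrightarrow> (m, x) \<in> snd (times_n (rev_order omega2) n)" by blast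
  then obtain i z where iz: "m = prod_encode (i, z)" "i < n" using tn_dom_ex by blast
  obtain a b where z: "z = prod_encode (a, b)" by (metis prod_decode_inverse surj_pair)
  let ?x = "prod_encode (i, prod_encode (Suc a, b))"
  have "?x \<in> fst (times_n (rev_order omega2) n)" using iz by (simp add: tn_dom om_simps)
  moreover have "?x \<noteq> m" using iz z by simp
  ultimately have "(m, ?x) \<in> snd (times_n (rev_order omega2) n)" using m(2) by blast
  then show False using iz z by (simp add: tn_rel om2_rel om_simps)
qed

theorem theorem3p1:
  fixes n :: nat
  assumes "n \<ge> 1"
  shows "comp_reducible
           (cls2 (times_n omega n) (times_n (rev_order omega) n))
           (cls2 (times_n omega2 n) (times_n (rev_order omega2) n))"
proof -
  let ?X = "times_n omega n" and ?Y = "times_n (rev_order omega) n"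
  let ?X2 = "times_n omega2 n" and ?Y2 = "times_n (rev_order omega2) n"
  have i1: "iso (sq ?X) ?X2" using iso1 assms .
  have i2: "iso (sq ?Y) ?Y2" using iso2 assms .
  have nl: "\<not> iso ?X2 ?Y2" using has_least_iso has_least_om2[OF assms] not_has_least_rev by blast
  have img: "sq A \<in> cls2 ?X2 ?Y2" if "A \<in> cls2 ?X ?Y" for A
  proof -
    have "is_struc A" "iso A ?X \<or> iso A ?Y" using that unfolding cls2_def by auto
    then show ?thesis unfolding cls2_def using sq_struc iso_sq iso_trans i1 i2 by blast
  qed
  have part2: "\<forall>A \<in> cls2 ?X ?Y. \<exists>B \<in> cls2 ?X2 ?Y2. apply_op Gam (diag A) = diag B"
    using img apply_Gam by blast
  have part3: "iso A1 A2 \<longleftrightarrow> iso B1 B2"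
    if A: "A1 \<in> cls2 ?X ?Y" "A2 \<in> cls2 ?X ?Y" and B: "is_struc B1" "is_struc B2"
      "apply_op Gam (diag A1) = diag B1" "apply_op Gam (diag A2) = diag B2" for A1 A2 B1 B2
  proof -
    have s: "is_struc A1" "is_struc A2" using A unfolding cls2_def by auto
    have "B1 = sq A1" "B2 = sq A2"
      using diag_inj[OF B(1) sq_struc[OF s(1)]] diag_inj[OF B(2) sq_struc[OF s(2)]] B(3,4) apply_Gam by auto
    moreover have "iso A1 A2 \<longleftrightarrow> iso (sq A1) (sq A2)"
    proof
      assume "iso A1 A2" then show "iso (sq A1) (sq A2)" by (rule iso_sq)
    next
      assume h: "iso (sq A1) (sq A2)"
      have c1: "iso A1 ?X \<or> iso A1 ?Y" and c2: "iso A2 ?X \<or> iso A2 ?Y" using A unfolding cls2_def by auto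
      from c1 c2 show "iso A1 A2"
      proof (elim disjE)
        assume "iso A1 ?X" "iso A2 ?X" then show ?thesis using iso_sym iso_trans by blast
      next
        assume "iso A1 ?Y" "iso A2 ?Y" then show ?thesis using iso_sym iso_trans by blast
      next
        assume a: "iso A1 ?X" "iso A2 ?Y"
        have "iso ?X2 ?Y2"
          using iso_sq[OF a(1)] iso_sq[OF a(2)] h i1 i2 iso_sym iso_trans by metis
        then show ?thesis using nl by blast
      next
        assume a: "iso A1 ?Y" "iso A2 ?X"
        have "iso ?X2 ?Y2"
          using iso_sq[OF a(1)] iso_sq[OF a(2)] h i1 i2 iso_sym iso_trans by metis
        then show ?thesis using nl by blast
      qed
    qed
    ultimately show ?thesis by simp
  qed
  show ?thesis
    unfolding comp_reducible_def comp_embedding_def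
    using enum_Gam part2 part3 by blast
qed


end
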